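(* Let $k\geq 1$ be a fixed integer. Then almost surely $$\kappa_3\!\left(G\!\left(n,\tfrac{1}{2}\cdot\frac{\log n+(k+1)\log\log n-\log\log\log n}{n}\right)\right)\leq k-1.$$
   Context: $\log$ is the natural logarithm; $G(n,p)$ is the binomial random graph on $n$ vertices, $n\to\infty$, and "almost surely" means with probability tending to $1$. For $S\subseteq V(G)$, trees $T_1,\dots,T_k$ are internally disjoint trees connecting $S$ if $S\subseteq V(T_i)$, $E(T_i)\cap E(T_j)=\emptyset$ and $V(T_i)\cap V(T_j)=S$ for $i\neq j$; $\kappa(S)$ is the maximum number of such trees and $\kappa_3(G)=\min\{\kappa(S):|S|=3\}$, with $\kappa_3(G)=0$ if $G$ is disconnected. *)

theory Defs
  imports Complex_Main
begin

(* Graphs on vertex set {0..<n}; a graph is given by its edge set, edges are 2-element sets. *)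

definition all_edges :: "nat \<Rightarrow> nat set set" where
  "all_edges n = {e. \<exists>u v. u < n \<and> v < n \<and> u \<noteq> v \<and> e = {u, v}}"

definition gnp_prob :: "nat \<Rightarrow> real \<Rightarrow> (nat set set \<Rightarrow> bool) \<Rightarrow> real" where
  "gnp_prob n p P =
     (\<Sum>E\<in>Pow (all_edges n).
        if P E then p ^ card E * (1 - p) ^ (card (all_edges n) - card E) else 0)"

definition adj :: "'a set set \<Rightarrow> 'a \<Rightarrow> 'a \<Rightarrow> bool" where
  "adj E u v \<longleftrightarrow> u \<noteq> v \<and> {u, v} \<in> E"

definition connected_graph :: "'a set \<Rightarrow> 'a set set \<Rightarrow> bool" where
  "connected_graph V E \<longleftrightarrow> (\<forall>u\<in>V. \<forall>v\<in>V. (adj E)\<^sup>*\<^sup>* u v)"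

definition has_cycle :: "'a set set \<Rightarrow> bool" where
  "has_cycle E \<longleftrightarrow> (\<exists>xs. length xs \<ge> 3 \<and> distinct xs \<and>
      (\<forall>i < length xs. {xs ! i, xs ! ((i + 1) mod length xs)} \<in> E))"

definition is_subtree :: "nat set set \<Rightarrow> nat set \<Rightarrow> nat set set \<Rightarrow> bool" where
  "is_subtree E VT ET \<longleftrightarrow> finite VT \<and> VT \<noteq> {} \<and> ET \<subseteq> E \<and>
     (\<forall>e\<in>ET. e \<subseteq> VT) \<and> connected_graph VT ET \<and> \<not> has_cycle ET"

definition int_disjoint_trees :: "nat set set \<Rightarrow> nat set \<Rightarrow> nat \<Rightarrow> (nat \<Rightarrow> nat set \<times> nat set set) \<Rightarrow> bool" where
  "int_disjoint_trees E S k T \<longleftrightarrow>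
     (\<forall>i<k. is_subtree E (fst (T i)) (snd (T i)) \<and> S \<subseteq> fst (T i)) \<and>
     (\<forall>i<k. \<forall>j<k. i \<noteq> j \<longrightarrow> snd (T i) \<inter> snd (T j) = {} \<and> fst (T i) \<inter> fst (T j) = S)"

definition kappa :: "nat set set \<Rightarrow> nat set \<Rightarrow> nat" where
  "kappa E S = Max {k. \<exists>T. int_disjoint_trees E S k T}"

definition kappa3 :: "nat \<Rightarrow> nat set set \<Rightarrow> nat" where
  "kappa3 n E = (if connected_graph {0..<n} E
                 then Min {kappa E S | S. S \<subseteq> {0..<n} \<and> card S = 3} else 0)"

end

theory Submission imports Defs "HOL-Real_Asymp.Real_Asymp" begin
definition wt :: "'b set \<Rightarrow> real \<Rightarrow> 'b set \<Rightarrow> real" where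
  "wt A p E = p ^ card E * (1 - p) ^ (card A - card E)"

lemma wt_nonneg: "0 \<le> p \<Longrightarrow> p \<le> 1 \<Longrightarrow> 0 \<le> wt A p E"
  unfolding wt_def by simp

lemma sum_avoid:
  assumes fin: "finite A" and BA: "B \<subseteq> A"
  shows "(\<Sum>E\<in>Pow A. if E \<inter> B = {} then wt A p E else 0) = (1-p)^card B"
proof -
  have finB: "finite B" using fin BA finite_subset by blast
  have "(\<Sum>E\<in>Pow A. if E \<inter> B = {} then wt A p E else 0) = (\<Sum>E\<in>{E\<in>Pow A. E \<inter> B = {}}. wt A p E)"
    by (rule sum.inter_filter[symmetric]) (simp add: fin)
  also have "{E\<in>Pow A. E \<inter> B = {}} = Pow (A - B)" by auto
  also have "(\<Sum>E\<in>Pow (A-B). wt A p E) = (\<Sum>E\<in>Pow (A-B). ((\<Prod>e\<in>E. p) * (\<Prod>e\<in>(A-B)-E. 1-p)) * (1-p)^card B)"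
  proof (rule sum.cong)
    fix E assume E: "E \<in> Pow (A - B)"
    have finE: "finite E" using E fin finite_subset by auto
    have c1: "card A = card (A - B) + card B" using card_Diff_subset[OF finB BA] card_mono[OF fin BA] by simp
    have c2: "card ((A - B) - E) = card (A - B) - card E" using E finE by (simp add: card_Diff_subset)
    have c3: "card E \<le> card (A - B)" using E fin by (simp add: card_mono)
    have "card A - card E = card ((A - B) - E) + card B" using c1 c2 c3 by simp
    then show "wt A p E = ((\<Prod>e\<in>E. p) * (\<Prod>e\<in>(A-B)-E. 1-p)) * (1-p)^card B"
      unfolding wt_def by (simp add: power_add)
  qed simp
  also have "\<dots> = (\<Prod>e\<in>A-B. p + (1-p)) * (1-p)^card B"
    by (subst prod_add) (use fin in \<open>simp_all add: sum_distrib_right\<close>)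
  also have "\<dots> = (1-p)^card B" by simp
  finally show ?thesis .
qed

lemma finite_all_edges: "finite (all_edges n)"
proof -
  have "all_edges n \<subseteq> Pow {0..<n}" unfolding all_edges_def by auto
  then show ?thesis by (rule finite_subset) simp
qed

definition Bv :: "nat \<Rightarrow> nat \<Rightarrow> nat set set" where
  "Bv n v = {e\<in>all_edges n. v \<in> e}"

lemma card_Bv: assumes "v < n" shows "card (Bv n v) = n - 1"
proof -
  have eq: "Bv n v = (\<lambda>u. {u, v}) ` ({0..<n} - {v})"
    unfolding Bv_def all_edges_def using assms by auto
  have "inj_on (\<lambda>u. {u, v}) ({0..<n} - {v})"
    by (auto simp: inj_on_def doubleton_eq_iff)
  then have "card (Bv n v) = card ({0..<n} - {v})" unfolding eq by (rule card_image)
  then show ?thesis using assms by simp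
qed

lemma Bv_sub: "Bv n v \<subseteq> all_edges n" unfolding Bv_def by auto

lemma card_Bv_Un: assumes "u < n" "v < n" "u \<noteq> v"
  shows "card (Bv n u \<union> Bv n v) \<ge> 2 * n - 3"
proof -
  have "Bv n u \<inter> Bv n v \<subseteq> {{u, v}}"
    unfolding Bv_def all_edges_def using assms by auto
  then have "card (Bv n u \<inter> Bv n v) \<le> 1"
    by (metis card.empty card_mono finite.emptyI finite.insertI is_singletonI is_singleton_altdef le_numeral_extra(4) subset_singletonD)
  moreover have "card (Bv n u \<union> Bv n v) + card (Bv n u \<inter> Bv n v) = card (Bv n u) + card (Bv n v)"
    using card_Un_Int[of "Bv n u" "Bv n v"] finite_subset[OF Bv_sub finite_all_edges] by simp
  ultimately show ?thesis using card_Bv[OF assms(1)] card_Bv[OF assms(2)] by simp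
qed

lemma main_bound:
  fixes n :: nat and p :: real
  assumes n: "n \<ge> 2" and p0: "0 \<le> p" and p1: "p < 1"
  shows "(\<Sum>E\<in>Pow (all_edges n). if (\<forall>v<n. \<exists>e\<in>E. v\<in>e) then wt (all_edges n) p E else 0)
          \<le> 1/(real n*(1-p)^(n-1)) + p/(1-p)"
proof -
  define A where "A = all_edges n"
  define q where "q = 1 - p"
  define a where "a = q^(n-1)"
  have finA: "finite A" unfolding A_def by (rule finite_all_edges)
  have q0: "0 < q" "q \<le> 1" using p0 p1 unfolding q_def by auto
  have a0: "0 < a" unfolding a_def using q0 by simp
  define X where "X E = (\<Sum>v<n. if E \<inter> Bv n v = {} then 1 else 0::real)" for E
  have wnn: "0 \<le> wt A p E" for E using wt_nonneg[of p A E] p0 p1 by simp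
  have Xnn: "0 \<le> X E" for E unfolding X_def by (simp add: sum_nonneg)
  have iff: "(\<forall>v<n. \<exists>e\<in>E. v\<in>e) \<longleftrightarrow> X E = 0" if "E \<in> Pow A" for E
  proof -
    have "X E = 0 \<longleftrightarrow> (\<forall>v\<in>{..<n}. (if E \<inter> Bv n v = {} then 1 else 0::real) = 0)"
      unfolding X_def by (rule sum_nonneg_eq_0_iff) auto
    also have "\<dots> \<longleftrightarrow> (\<forall>v<n. \<exists>e\<in>E. v\<in>e)"
      using that unfolding Bv_def A_def by auto
    finally show ?thesis by simp
  qed
  have S0: "(\<Sum>E\<in>Pow A. wt A p E) = 1"
    using sum_avoid[OF finA, of "{}" p] by simp
  have S1: "(\<Sum>E\<in>Pow A. wt A p E * X E) = n * a"
  proof -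
    have "(\<Sum>E\<in>Pow A. wt A p E * X E) = (\<Sum>E\<in>Pow A. \<Sum>v<n. if E \<inter> Bv n v = {} then wt A p E else 0)"
      unfolding X_def by (simp add: sum_distrib_left if_distrib cong: if_cong)
    also have "\<dots> = (\<Sum>v<n. \<Sum>E\<in>Pow A. if E \<inter> Bv n v = {} then wt A p E else 0)"
      by (rule sum.swap)
    also have "\<dots> = (\<Sum>v<n. a)"
      by (rule sum.cong) (use sum_avoid[OF finA] Bv_sub card_Bv in \<open>auto simp: A_def a_def q_def\<close>)
    finally show ?thesis by simp
  qed
  have S2: "(\<Sum>E\<in>Pow A. wt A p E * (X E)^2) \<le> n * a + n * (n - 1) * q^(2*n-3)"
  proof -
    have X2: "(X E)^2 = (\<Sum>u<n. \<Sum>v<n. if E \<inter> (Bv n u \<union> Bv n v) = {} then 1 else 0::real)" for E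
      unfolding X_def power2_eq_square sum_product by (rule sum.cong, simp, rule sum.cong) auto
    have "(\<Sum>E\<in>Pow A. wt A p E * (X E)^2) = (\<Sum>E\<in>Pow A. \<Sum>u<n. \<Sum>v<n. if E \<inter> (Bv n u \<union> Bv n v) = {} then wt A p E else 0)"
      unfolding X2 by (simp add: sum_distrib_left if_distrib cong: if_cong)
    also have "\<dots> = (\<Sum>u<n. \<Sum>E\<in>Pow A. \<Sum>v<n. if E \<inter> (Bv n u \<union> Bv n v) = {} then wt A p E else 0)"
      by (rule sum.swap)
    also have "\<dots> = (\<Sum>u<n. \<Sum>v<n. \<Sum>E\<in>Pow A. if E \<inter> (Bv n u \<union> Bv n v) = {} then wt A p E else 0)"
      by (rule sum.cong[OF refl], rule sum.swap)
    also have "\<dots> = (\<Sum>u<n. \<Sum>v<n. q ^ card (Bv n u \<union> Bv n v))"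
      by (intro sum.cong refl, subst sum_avoid[OF finA]) (use Bv_sub in \<open>auto simp: A_def q_def\<close>)
    also have "\<dots> \<le> (\<Sum>u<n. a + (n - 1) * q^(2*n-3))"
    proof (rule sum_mono)
      fix u assume u: "u \<in> {..<n}"
      have "(\<Sum>v<n. q ^ card (Bv n u \<union> Bv n v)) = q ^ card (Bv n u \<union> Bv n u) + (\<Sum>v\<in>{..<n}-{u}. q ^ card (Bv n u \<union> Bv n v))"
        using u by (simp add: sum.remove)
      also have "q ^ card (Bv n u \<union> Bv n u) = a" using card_Bv u by (simp add: a_def)
      also have "(\<Sum>v\<in>{..<n}-{u}. q ^ card (Bv n u \<union> Bv n v)) \<le> (\<Sum>v\<in>{..<n}-{u}. q^(2*n-3))"
        by (rule sum_mono, rule power_decreasing) (use card_Bv_Un u q0 in auto)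
      also have "\<dots> = (n - 1) * q^(2*n-3)" using u by simp
      finally show "(\<Sum>v<n. q ^ card (Bv n u \<union> Bv n v)) \<le> a + (n - 1) * q^(2*n-3)" by simp
    qed
    also have "\<dots> = n * a + n * (n - 1) * q^(2*n-3)" by (simp add: algebra_simps)
    finally show ?thesis .
  qed
  define P0 where "P0 = (\<Sum>E\<in>Pow A. if X E = 0 then wt A p E else 0)"
  have P0eq: "(\<Sum>E\<in>Pow A. if (\<forall>v<n. \<exists>e\<in>E. v\<in>e) then wt A p E else 0) = P0"
    unfolding P0_def by (rule sum.cong) (use iff in auto)
  let ?m = "real n * a"
  have key: "P0 * ?m^2 \<le> (\<Sum>E\<in>Pow A. wt A p E * (X E)^2) - ?m^2"
  proof -
    have "P0 * ?m^2 = (\<Sum>E\<in>Pow A. (if X E = 0 then wt A p E else 0) * ?m^2)"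
      unfolding P0_def by (simp add: sum_distrib_right)
    also have "\<dots> \<le> (\<Sum>E\<in>Pow A. wt A p E * (X E - ?m)^2)"
      by (rule sum_mono) (use wnn in auto)
    also have "\<dots> = (\<Sum>E\<in>Pow A. wt A p E * (X E)^2) - 2 * ?m * (\<Sum>E\<in>Pow A. wt A p E * X E) + ?m^2 * (\<Sum>E\<in>Pow A. wt A p E)"
      by (simp add: power2_diff algebra_simps sum.distrib sum_subtractf sum_distrib_left sum_distrib_right)
    also have "\<dots> = (\<Sum>E\<in>Pow A. wt A p E * (X E)^2) - ?m^2"
      unfolding S0 S1 by (simp add: power2_eq_square)
    finally show ?thesis .
  qed
  have m0: "0 < ?m" using n a0 by simp
  have qa: "q^(2*n-3) * q = a * a"
  proof -
    have "q^(2*n-3) * q = q^(2*n-2)" using n by (simp add: power_Suc2[symmetric] Suc_diff_Suc numeral_eq_Suc)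
    also have "\<dots> = a * a" proof -
      have "2*n-2 = (n-1)+(n-1)" using n by simp
      then show ?thesis unfolding a_def by (simp add: power_add)
    qed
    finally show ?thesis .
  qed
  have "P0 * ?m^2 \<le> n * a + n * (n - 1) * q^(2*n-3) - ?m^2" using key S2 by linarith
  also have "\<dots> \<le> n * a + real n * real n * q^(2*n-3) * p"
  proof -
    have "real (n * (n - 1)) * q^(2*n-3) - ?m^2 \<le> real n * real n * q^(2*n-3) - real n * real n * (q^(2*n-3) * q)"
      using qa n q0 by (simp add: power2_eq_square algebra_simps of_nat_diff mult_left_mono)
    also have "\<dots> = real n * real n * q^(2*n-3) * p" unfolding q_def by (simp add: algebra_simps)
    finally show ?thesis by simp
  qed
  finally have "P0 * ?m^2 \<le> n * a + real n * real n * q^(2*n-3) * p" .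
  then have "P0 \<le> (n * a + real n * real n * q^(2*n-3) * p) / ?m^2"
    using m0 n by (subst pos_le_divide_eq) auto
  also have "\<dots> = 1 / ?m + p / q"
  proof -
    have "real n * real n * q^(2*n-3) * p / ?m^2 = p / q"
      using qa m0 q0 a0 n by (simp add: field_simps power2_eq_square)
    moreover have "n * a / ?m^2 = 1 / ?m" using m0 by (simp add: power2_eq_square)
    ultimately show ?thesis by (simp add: add_divide_distrib)
  qed
  finally show ?thesis using P0eq unfolding A_def a_def q_def by simp
qed

lemma asymA: fixes K::real
  shows "filterlim (\<lambda>n::nat. real n * exp (- real n * (1/2 * (ln (real n) + K * ln (ln (real n)) - ln (ln (ln (real n)))) / real n)
        - 2 * real n * (1/2 * (ln (real n) + K * ln (ln (real n)) - ln (ln (ln (real n)))) / real n)^2)) at_top sequentially"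
  by real_asymp

lemma asymB: fixes K::real
  shows "(\<lambda>n::nat. (1/2 * (ln (real n) + K * ln (ln (real n)) - ln (ln (ln (real n)))) / real n)) \<longlonglongrightarrow> 0"
  by real_asymp

lemma asymC: fixes K::real assumes "K>0"
  shows "eventually (\<lambda>n::nat. (1/2 * (ln (real n) + K * ln (ln (real n)) - ln (ln (ln (real n)))) / real n) > 0) sequentially"
  using assms by real_asymp

lemma isolated_kappa3:
  assumes n: "n \<ge> 2" and v: "v < n" and iso: "\<forall>e\<in>E. v \<notin> e"
  shows "kappa3 n E = 0"
proof -
  define u where "u = (if v = 0 then 1 else 0::nat)"
  have u: "u < n" "u \<noteq> v" using n v unfolding u_def by auto
  have "\<not> (adj E)\<^sup>*\<^sup>* u v"
  proof
    assume "(adj E)\<^sup>*\<^sup>* u v"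
    then show False
    proof (cases rule: rtranclp.cases)
      case rtrancl_refl then show ?thesis using u by simp
    next
      case (rtrancl_into_rtrancl w)
      then have "{w, v} \<in> E" unfolding adj_def by simp
      then show ?thesis using iso by auto
    qed
  qed
  moreover have "(adj E)\<^sup>*\<^sup>* u v" if "connected_graph {0..<n} E"
    using that u v unfolding connected_graph_def by auto
  ultimately have "\<not> connected_graph {0..<n} E" by blast
  then show ?thesis unfolding kappa3_def by simp
qed

lemma q_lower:
  fixes p :: real and n :: nat
  assumes "0 \<le> p" "p \<le> 1/2"
  shows "real n * exp (- real n * p - 2 * real n * p^2) \<le> real n * (1 - p)^(n-1)"
proof -
  have q: "0 < 1 - p" using assms by simp
  have l: "- p - 2 * p\<^sup>2 \<le> ln (1 - p)" by (rule ln_one_minus_pos_lower_bound) (use assms in auto)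
  have "- real n * p - 2 * real n * p^2 = real n * (- p - 2 * p^2)" by (simp add: algebra_simps)
  also have "\<dots> \<le> real (n - 1) * (- p - 2 * p^2)"
  proof -
    have "0 \<le> p + 2 * p^2" using assms by simp
    moreover have "real (n - 1) \<le> real n" by simp
    ultimately have "real (n - 1) * (p + 2 * p^2) \<le> real n * (p + 2 * p^2)" by (rule mult_right_mono[rotated])
    moreover have "- p - 2*p^2 = -(p + 2*p^2)" by simp
    ultimately show ?thesis by (simp only:)
  qed
  also have "\<dots> \<le> real (n - 1) * ln (1 - p)" using l by (simp add: mult_left_mono)
  finally have "exp (- real n * p - 2 * real n * p^2) \<le> exp (real (n - 1) * ln (1 - p))" by simp
  also have "\<dots> = (1 - p)^(n-1)" using q by (simp add: exp_of_nat_mult)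
  finally show ?thesis by (simp add: mult_left_mono)
qed

theorem theorem4:
  fixes k :: nat
  assumes "k \<ge> 1"
  defines "p \<equiv> (\<lambda>n::nat. 1/2 * (ln (real n) + (real k + 1) * ln (ln (real n))
                                    - ln (ln (ln (real n)))) / real n)"
  shows "(\<lambda>n. gnp_prob n (p n) (\<lambda>E. kappa3 n E \<le> k - 1)) \<longlonglongrightarrow> 1"
proof -
  define f where "f n = real n * exp (- real n * p n - 2 * real n * (p n)^2)" for n
  have p0: "p \<longlonglongrightarrow> 0" unfolding p_def using asymB[of "real k + 1"] by simp
  have fat: "filterlim f at_top sequentially" unfolding f_def p_def using asymA[of "real k + 1"] by simp
  have ev1: "eventually (\<lambda>n. p n > 0) sequentially" unfolding p_def using asymC[of "real k + 1"] by simp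
  have ev2: "eventually (\<lambda>n. p n < 1/2) sequentially" using p0 by (rule order_tendstoD) simp
  have ev3: "eventually (\<lambda>n. n \<ge> 2) sequentially" by (rule eventually_ge_at_top)
  have ev4: "eventually (\<lambda>n. f n > 0) sequentially" using fat by (rule filterlim_at_top_dense[THEN iffD1, rule_format]) 
  define L where "L n = 1 - (1/(real n*(1 - p n)^(n-1)) + p n/(1 - p n))" for n
  have bounds: "eventually (\<lambda>n. L n \<le> gnp_prob n (p n) (\<lambda>E. kappa3 n E \<le> k - 1) \<and>
                     gnp_prob n (p n) (\<lambda>E. kappa3 n E \<le> k - 1) \<le> 1) sequentially"
    using ev1 ev2 ev3
  proof eventually_elim
    case (elim n)
    define A where "A = all_edges n"
    define P where "P = (\<lambda>E. kappa3 n E \<le> k - 1)"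
    have finA: "finite A" unfolding A_def by (rule finite_all_edges)
    have wnn: "0 \<le> wt A (p n) E" for E using wt_nonneg[of "p n" A E] elim by simp
    have g: "gnp_prob n (p n) P = (\<Sum>E\<in>Pow A. if P E then wt A (p n) E else 0)"
      unfolding gnp_prob_def wt_def A_def ..
    have S0: "(\<Sum>E\<in>Pow A. wt A (p n) E) = 1"
      using sum_avoid[OF finA, of "{}" "p n"] by simp
    have split: "(\<Sum>E\<in>Pow A. if P E then wt A (p n) E else 0) + (\<Sum>E\<in>Pow A. if \<not> P E then wt A (p n) E else 0) = 1"
      unfolding S0[symmetric] sum.distrib[symmetric] by (rule sum.cong) auto
    have notP: "\<forall>v<n. \<exists>e\<in>E. v\<in>e" if "\<not> P E" for E
      using isolated_kappa3[of n _ E] elim that unfolding P_def by fastforce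
    have "(\<Sum>E\<in>Pow A. if \<not> P E then wt A (p n) E else 0) \<le> (\<Sum>E\<in>Pow A. if (\<forall>v<n. \<exists>e\<in>E. v\<in>e) then wt A (p n) E else 0)"
    proof (rule sum_mono)
      fix E show "(if \<not> P E then wt A (p n) E else 0) \<le> (if (\<forall>v<n. \<exists>e\<in>E. v\<in>e) then wt A (p n) E else 0)"
        using notP[of E] wnn[of E] by auto
    qed
    also have "\<dots> \<le> 1/(real n*(1 - p n)^(n-1)) + p n/(1 - p n)"
      unfolding A_def by (rule main_bound) (use elim in auto)
    finally have lo: "L n \<le> gnp_prob n (p n) P" using split g unfolding L_def by linarith
    have "(\<Sum>E\<in>Pow A. if \<not> P E then wt A (p n) E else 0) \<ge> 0" by (rule sum_nonneg) (use wnn in auto)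
    then have hi: "gnp_prob n (p n) P \<le> 1" using split g by linarith
    show ?case using lo hi unfolding P_def by simp
  qed
  have inv0: "(\<lambda>n. 1/(real n*(1 - p n)^(n-1))) \<longlonglongrightarrow> 0"
  proof (rule tendsto_sandwich[of "\<lambda>_. 0" _ _ "\<lambda>n. 1 / f n"])
    show "eventually (\<lambda>n. 0 \<le> 1/(real n*(1 - p n)^(n-1))) sequentially"
      using ev2 by eventually_elim simp
    show "eventually (\<lambda>n. 1/(real n*(1 - p n)^(n-1)) \<le> 1 / f n) sequentially"
      using ev1 ev2 ev4
    proof eventually_elim
      case (elim n)
      have "f n \<le> real n * (1 - p n)^(n-1)" unfolding f_def by (rule q_lower) (use elim in auto)
      then show ?case using elim by (intro divide_left_mono) auto
    qed
    show "(\<lambda>_. 0) \<longlonglongrightarrow> (0::real)" by simp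
    have "(\<lambda>n. inverse (f n)) \<longlonglongrightarrow> 0" using fat by (rule tendsto_inverse_0_at_top)
    then show "(\<lambda>n. 1 / f n) \<longlonglongrightarrow> 0" by (simp add: divide_inverse)
  qed
  have "(\<lambda>n. p n / (1 - p n)) \<longlonglongrightarrow> 0 / (1 - 0)"
    by (intro tendsto_intros p0) simp
  then have "L \<longlonglongrightarrow> 1 - (0 + 0 / (1 - 0))" unfolding L_def using inv0 p0
    by (intro tendsto_intros) auto
  then have L1: "L \<longlonglongrightarrow> 1" by simp
  show ?thesis
    by (rule tendsto_sandwich[OF _ _ L1 tendsto_const[of 1]]) (use bounds in \<open>auto elim: eventually_mono\<close>)
qed

end
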